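(* Assume Assumptions 1, 2 and 3 and $0<P(Z=1\mid R=r)<1$, $P(R=r)>0$ for $r=1,2$. Write $\omega_{ys\mid zr}=P(Y=y,S=s\mid Z=z,R=r)$ and $\delta_{zu}=P(Y=1\mid Z=z,U=u)$. Then $\pi_{\bar{s}\bar{s},r}=P(S=0\mid Z=1,R=r)$, $\pi_{ss,r}=P(S=1\mid Z=0,R=r)$ and $\pi_{s\bar{s},r}=1-\pi_{ss,r}-\pi_{\bar{s}\bar{s},r}$. If $\pi_{ss,1}\pi_{s\bar{s},2}-\pi_{ss,2}\pi_{s\bar{s},1}\neq 0$, then $$\delta_{1,ss}=\frac{\omega_{11\mid 11}\pi_{s\bar{s},2}-\omega_{11\mid 12}\pi_{s\bar{s},1}}{\pi_{ss,1}\pi_{s\bar{s},2}-\pi_{ss,2}\pi_{s\bar{s},1}},\qquad \delta_{1,s\bar{s}}=\frac{\omega_{11\mid 12}\pi_{ss,1}-\omega_{11\mid 11}\pi_{ss,2}}{\pi_{ss,1}\pi_{s\bar{s},2}-\pi_{ss,2}\pi_{s\bar{s},1}}.$$ If $\pi_{s\bar{s},1}\pi_{\bar{s}\bar{s},2}-\pi_{s\bar{s},2}\pi_{\bar{s}\bar{s},1}\neq 0$, then $$\delta_{0,s\bar{s}}=\frac{\omega_{10\mid 01}\pi_{\bar{s}\bar{s},2}-\omega_{10\mid 02}\pi_{\bar{s}\bar{s},1}}{\pi_{s\bar{s},1}\pi_{\bar{s}\bar{s},2}-\pi_{s\bar{s},2}\pi_{\bar{s}\bar{s},1}},\qquad \delta_{0,\bar{s}\bar{s}}=\frac{\omega_{10\mid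 02}\pi_{s\bar{s},1}-\omega_{10\mid 01}\pi_{s\bar{s},2}}{\pi_{s\bar{s},1}\pi_{\bar{s}\bar{s},2}-\pi_{s\bar{s},2}\pi_{\bar{s}\bar{s},1}}.$$ (Here $\delta_{1,ss},\delta_{1,s\bar{s}}$, resp. $\delta_{0,s\bar{s}},\delta_{0,\bar{s}\bar{s}}$, are assumed defined, i.e. the corresponding strata have positive probability.)
   Context: Setting: $N_R=2$ trials. A unit is described by $(R,Z,S(1),S(0),Y(1),Y(0))$ with $R\in\{1,2\}$ the trial, $Z\in\{0,1\}$ the treatment, $S(z),Y(z)\in\{0,1\}$ potential surrogate and endpoint. Observed $S=ZS(1)+(1-Z)S(0)$, $Y=ZY(1)+(1-Z)Y(0)$. $U=(S(1),S(0))$ with values $(1,1),(1,0),(0,1),(0,0)$ labeled $ss,s\bar{s},\bar{s}s,\bar{s}\bar{s}$; $\pi_{ur}=P(U=u\mid R=r)$. Assumption 1 (randomization): $Z\perp\!\!\!\perp\{S(1),S(0),Y(1),Y(0)\}\mid R$. Assumption 2 (monotonicity): $S(1)\ge S(0)$ almost surely. Assumption 3 (homogeneity): $R\perp\!\!\!\perp Y(z)\mid U$ for $z=0,1$; under Assumptions 1 and 3, $P(Y=1\mid Z=z,U=u,R=r)=P(Y=1\mid Z=z,U=u)$. *)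

theory Defs
  imports "HOL-Probability.Probability"
begin

text \<open>A unit is a tuple (R, Z, S(1), S(0), Y(1), Y(0)); binary quantities are booleans
  (True = 1, False = 0). The population is a discrete distribution (pmf) on such tuples.\<close>

type_synonym unit_t = "nat \<times> bool \<times> bool \<times> bool \<times> bool \<times> bool"

definition uR :: "unit_t \<Rightarrow> nat" where "uR x = fst x"
definition uZ :: "unit_t \<Rightarrow> bool" where "uZ x = fst (snd x)"
definition uS1 :: "unit_t \<Rightarrow> bool" where "uS1 x = fst (snd (snd x))"
definition uS0 :: "unit_t \<Rightarrow> bool" where "uS0 x = fst (snd (snd (snd x)))"
definition uY1 :: "unit_t \<Rightarrow> bool" where "uY1 x = fst (snd (snd (snd (snd x))))"
definition uY0 :: "unit_t \<Rightarrow> bool" where "uY0 x = snd (snd (snd (snd (snd x))))"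

definition uSz :: "bool \<Rightarrow> unit_t \<Rightarrow> bool" where "uSz z x = (if z then uS1 x else uS0 x)"
definition uYz :: "bool \<Rightarrow> unit_t \<Rightarrow> bool" where "uYz z x = (if z then uY1 x else uY0 x)"

definition obsS :: "unit_t \<Rightarrow> bool" where "obsS x = uSz (uZ x) x"
definition obsY :: "unit_t \<Rightarrow> bool" where "obsY x = uYz (uZ x) x"

text \<open>Principal stratum U = (S(1), S(0)): ss = (True,True), s-sbar = (True,False),
  sbar-s = (False,True), sbar-sbar = (False,False).\<close>
definition uU :: "unit_t \<Rightarrow> bool \<times> bool" where "uU x = (uS1 x, uS0 x)"

definition Pr :: "unit_t pmf \<Rightarrow> (unit_t \<Rightarrow> bool) \<Rightarrow> real" where
  "Pr p A = measure_pmf.prob p {x. A x}"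

definition cPr :: "unit_t pmf \<Rightarrow> (unit_t \<Rightarrow> bool) \<Rightarrow> (unit_t \<Rightarrow> bool) \<Rightarrow> real" where
  "cPr p A B = Pr p (\<lambda>x. A x \<and> B x) / Pr p B"

definition piU :: "unit_t pmf \<Rightarrow> bool \<times> bool \<Rightarrow> nat \<Rightarrow> real" where
  "piU p u r = cPr p (\<lambda>x. uU x = u) (\<lambda>x. uR x = r)"

definition omega :: "unit_t pmf \<Rightarrow> bool \<Rightarrow> bool \<Rightarrow> bool \<Rightarrow> nat \<Rightarrow> real" where
  "omega p y s z r = cPr p (\<lambda>x. obsY x = y \<and> obsS x = s) (\<lambda>x. uZ x = z \<and> uR x = r)"

definition delta :: "unit_t pmf \<Rightarrow> bool \<Rightarrow> bool \<times> bool \<Rightarrow> real" where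
  "delta p z u = cPr p (\<lambda>x. obsY x) (\<lambda>x. uZ x = z \<and> uU x = u)"

text \<open>Assumption 1 (randomization): Z independent of (S(1),S(0),Y(1),Y(0)) given R.\<close>
definition randomization :: "unit_t pmf \<Rightarrow> bool" where
  "randomization p \<longleftrightarrow> (\<forall>r z w.
     Pr p (\<lambda>x. uZ x = z \<and> (uS1 x, uS0 x, uY1 x, uY0 x) = w \<and> uR x = r) * Pr p (\<lambda>x. uR x = r)
     = Pr p (\<lambda>x. uZ x = z \<and> uR x = r) * Pr p (\<lambda>x. (uS1 x, uS0 x, uY1 x, uY0 x) = w \<and> uR x = r))"

definition monotonicity :: "unit_t pmf \<Rightarrow> bool" where
  "monotonicity p \<longleftrightarrow> (AE x in measure_pmf p. uS0 x \<longrightarrow> uS1 x)"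

text \<open>Assumption 3 (homogeneity): R independent of Y(z) given U, for z = 0, 1.\<close>
definition homogeneity :: "unit_t pmf \<Rightarrow> bool" where
  "homogeneity p \<longleftrightarrow> (\<forall>z r y u.
     Pr p (\<lambda>x. uR x = r \<and> uYz z x = y \<and> uU x = u) * Pr p (\<lambda>x. uU x = u)
     = Pr p (\<lambda>x. uR x = r \<and> uU x = u) * Pr p (\<lambda>x. uYz z x = y \<and> uU x = u))"

end

theory Submission imports Defs begin

lemma Pr_cong: "(\<And>x. A x = B x) \<Longrightarrow> Pr p A = Pr p B"
proof -
  assume "\<And>x. A x = B x" then have "A = B" by blast
  thus ?thesis by simp
qed

lemma Pr_AE_cong: "AE x in measure_pmf p. A x = B x \<Longrightarrow> Pr p A = Pr p B"
  unfolding Pr_def by (rule measure_pmf.finite_measure_eq_AE) auto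

lemma Pr_split: "Pr p A = Pr p (\<lambda>x. A x \<and> B x) + Pr p (\<lambda>x. A x \<and> \<not> B x)"
proof -
  have "{x. A x} = {x. A x \<and> B x} \<union> {x. A x \<and> \<not> B x}" by auto
  thus ?thesis unfolding Pr_def by (simp add: measure_pmf.finite_measure_Union disjoint_iff)
qed

lemma Pr_nonneg: "0 \<le> Pr p A" by (simp add: Pr_def)

lemma Pr_False: "Pr p (\<lambda>x. False) = 0" by (simp add: Pr_def)

lemma Pr_sum: "finite W \<Longrightarrow> Pr p (\<lambda>x. g x \<in> W \<and> B x) = (\<Sum>w\<in>W. Pr p (\<lambda>x. g x = w \<and> B x))"
proof (induction W rule: finite_induct)
  case empty then show ?case by (simp add: Pr_False)
next
  case (insert w W)
  have "Pr p (\<lambda>x. g x \<in> insert w W \<and> B x) = Pr p (\<lambda>x. (g x \<in> insert w W \<and> B x) \<and> g x = w)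
     + Pr p (\<lambda>x. (g x \<in> insert w W \<and> B x) \<and> \<not> g x = w)" by (rule Pr_split)
  also have "Pr p (\<lambda>x. (g x \<in> insert w W \<and> B x) \<and> g x = w) = Pr p (\<lambda>x. g x = w \<and> B x)"
    by (rule Pr_cong) auto
  also have "Pr p (\<lambda>x. (g x \<in> insert w W \<and> B x) \<and> \<not> g x = w) = Pr p (\<lambda>x. g x \<in> W \<and> B x)"
    using insert by (intro Pr_cong) auto
  finally show ?case using insert by simp
qed

lemma Pr_R: assumes "AE x in measure_pmf p. uR x \<in> {1, 2}"
  shows "Pr p A = Pr p (\<lambda>x. A x \<and> uR x = 1) + Pr p (\<lambda>x. A x \<and> uR x = 2)"
proof -
  have "Pr p A = Pr p (\<lambda>x. A x \<and> uR x = 1) + Pr p (\<lambda>x. A x \<and> \<not> uR x = 1)" by (rule Pr_split)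
  also have "Pr p (\<lambda>x. A x \<and> \<not> uR x = 1) = Pr p (\<lambda>x. (A x \<and> \<not> uR x = 1) \<and> uR x = 2)
      + Pr p (\<lambda>x. (A x \<and> \<not> uR x = 1) \<and> \<not> uR x = 2)" by (rule Pr_split)
  also have "Pr p (\<lambda>x. (A x \<and> \<not> uR x = 1) \<and> uR x = 2) = Pr p (\<lambda>x. A x \<and> uR x = 2)"
    by (rule Pr_cong) auto
  also have "Pr p (\<lambda>x. (A x \<and> \<not> uR x = 1) \<and> \<not> uR x = 2) = Pr p (\<lambda>x. False)"
    by (rule Pr_AE_cong) (use assms in \<open>auto elim: AE_mp\<close>)
  finally show ?thesis by (simp add: Pr_False)
qed

lemma rand_mult:
  assumes A1: "randomization p"
    and hA: "\<And>x. A x = (uZ x = z \<and> f (uS1 x, uS0 x, uY1 x, uY0 x) \<and> uR x = r)"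
    and hC: "\<And>x. C x = (f (uS1 x, uS0 x, uY1 x, uY0 x) \<and> uR x = r)"
  shows "Pr p A * Pr p (\<lambda>x. uR x = r) = Pr p (\<lambda>x. uZ x = z \<and> uR x = r) * Pr p C"
proof -
  let ?T = "\<lambda>x. (uS1 x, uS0 x, uY1 x, uY0 x)"
  let ?W = "{w. f w}"
  have fin: "finite ?W" by simp
  have "Pr p A = Pr p (\<lambda>x. ?T x \<in> ?W \<and> (uZ x = z \<and> uR x = r))" using hA by (intro Pr_cong) auto
  also have "\<dots> = (\<Sum>w\<in>?W. Pr p (\<lambda>x. ?T x = w \<and> (uZ x = z \<and> uR x = r)))" by (rule Pr_sum[OF fin])
  also have "\<dots> = (\<Sum>w\<in>?W. Pr p (\<lambda>x. uZ x = z \<and> ?T x = w \<and> uR x = r))"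
    by (intro sum.cong refl Pr_cong) auto
  finally have a: "Pr p A = (\<Sum>w\<in>?W. Pr p (\<lambda>x. uZ x = z \<and> ?T x = w \<and> uR x = r))" .
  have "Pr p C = Pr p (\<lambda>x. ?T x \<in> ?W \<and> uR x = r)" using hC by (intro Pr_cong) auto
  also have "\<dots> = (\<Sum>w\<in>?W. Pr p (\<lambda>x. ?T x = w \<and> uR x = r))" by (rule Pr_sum[OF fin])
  finally have c: "Pr p C = (\<Sum>w\<in>?W. Pr p (\<lambda>x. ?T x = w \<and> uR x = r))" .
  show ?thesis unfolding a c sum_distrib_left sum_distrib_right
    using A1 unfolding randomization_def by (intro sum.cong refl) blast
qed

lemma rand_cond:
  assumes A1: "randomization p"
    and pZ: "Pr p (\<lambda>x. uZ x = z \<and> uR x = r) > 0" and pR: "Pr p (\<lambda>x. uR x = r) > 0"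
    and hA: "\<And>x. A x = (uZ x = z \<and> f (uS1 x, uS0 x, uY1 x, uY0 x) \<and> uR x = r)"
    and hB: "\<And>x. B x = (uZ x = z \<and> uR x = r)"
    and hC: "\<And>x. C x = (f (uS1 x, uS0 x, uY1 x, uY0 x) \<and> uR x = r)"
  shows "Pr p A / Pr p B = Pr p C / Pr p (\<lambda>x. uR x = r)"
proof -
  have B: "Pr p B = Pr p (\<lambda>x. uZ x = z \<and> uR x = r)" using hB by (rule Pr_cong)
  have "Pr p A * Pr p (\<lambda>x. uR x = r) = Pr p (\<lambda>x. uZ x = z \<and> uR x = r) * Pr p C"
    by (rule rand_mult[OF A1 hA hC])
  thus ?thesis using pZ pR unfolding B by (simp add: field_simps)
qed

definition qd :: "unit_t pmf \<Rightarrow> bool \<Rightarrow> bool \<times> bool \<Rightarrow> real" where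
  "qd p z u = Pr p (\<lambda>x. uYz z x \<and> uU x = u) / Pr p (\<lambda>x. uU x = u)"

lemma hom:
  assumes A3: "homogeneity p" and pU: "Pr p (\<lambda>x. uU x = u) > 0"
  shows "Pr p (\<lambda>x. uYz z x \<and> uU x = u \<and> uR x = r) = qd p z u * Pr p (\<lambda>x. uU x = u \<and> uR x = r)"
proof -
  have h: "Pr p (\<lambda>x. uR x = r \<and> uYz z x = True \<and> uU x = u) * Pr p (\<lambda>x. uU x = u)
     = Pr p (\<lambda>x. uR x = r \<and> uU x = u) * Pr p (\<lambda>x. uYz z x = True \<and> uU x = u)"
    using A3 unfolding homogeneity_def by blast
  have e1: "Pr p (\<lambda>x. uR x = r \<and> uYz z x = True \<and> uU x = u) = Pr p (\<lambda>x. uYz z x \<and> uU x = u \<and> uR x = r)"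
    by (rule Pr_cong) auto
  have e2: "Pr p (\<lambda>x. uR x = r \<and> uU x = u) = Pr p (\<lambda>x. uU x = u \<and> uR x = r)"
    by (rule Pr_cong) auto
  show ?thesis using h pU unfolding e1 e2 qd_def by (simp add: field_simps)
qed


lemma pU_from: "Pr p (\<lambda>x. uZ x = z \<and> uU x = u) > 0 \<Longrightarrow> Pr p (\<lambda>x. uU x = u) > 0"
proof -
  assume pZU: "Pr p (\<lambda>x. uZ x = z \<and> uU x = u) > 0"
  have "Pr p (\<lambda>x. uU x = u) = Pr p (\<lambda>x. uU x = u \<and> uZ x = z) + Pr p (\<lambda>x. uU x = u \<and> \<not> uZ x = z)"
    by (rule Pr_split)
  also have "Pr p (\<lambda>x. uU x = u \<and> uZ x = z) = Pr p (\<lambda>x. uZ x = z \<and> uU x = u)" by (rule Pr_cong) auto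
  finally show "Pr p (\<lambda>x. uU x = u) > 0" using pZU Pr_nonneg[of p "\<lambda>x. uU x = u \<and> \<not> uZ x = z"] by linarith
qed

lemma delta_eq:
  assumes trials: "AE x in measure_pmf p. uR x \<in> {1, 2}"
    and A1: "randomization p" and A3: "homogeneity p"
    and posR: "\<And>r. r \<in> {1, 2} \<Longrightarrow> Pr p (\<lambda>x. uR x = r) > 0"
    and pZU: "Pr p (\<lambda>x. uZ x = z \<and> uU x = u) > 0"
  shows "delta p z u = qd p z u"
proof -
  have "Pr p (\<lambda>x. uU x = u) = Pr p (\<lambda>x. uU x = u \<and> uZ x = z) + Pr p (\<lambda>x. uU x = u \<and> \<not> uZ x = z)"
    by (rule Pr_split)
  also have "Pr p (\<lambda>x. uU x = u \<and> uZ x = z) = Pr p (\<lambda>x. uZ x = z \<and> uU x = u)" by (rule Pr_cong) auto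
  finally have pU: "Pr p (\<lambda>x. uU x = u) > 0" using pZU Pr_nonneg[of p "\<lambda>x. uU x = u \<and> \<not> uZ x = z"] by linarith
  define a where "a r = Pr p (\<lambda>x. uZ x = z \<and> uR x = r) / Pr p (\<lambda>x. uR x = r)" for r
  have num: "Pr p (\<lambda>x. obsY x \<and> uZ x = z \<and> uR x = r \<and> uU x = u) = a r * (qd p z u * Pr p (\<lambda>x. uU x = u \<and> uR x = r))"
    if r: "r \<in> {1,2}" for r
  proof -
    have "Pr p (\<lambda>x. obsY x \<and> uZ x = z \<and> uR x = r \<and> uU x = u) * Pr p (\<lambda>x. uR x = r)
        = Pr p (\<lambda>x. uZ x = z \<and> uR x = r) * Pr p (\<lambda>x. uYz z x \<and> uU x = u \<and> uR x = r)"
      by (rule rand_mult[OF A1, where f="\<lambda>(s1,s0,y1,y0). (if z then y1 else y0) \<and> (s1,s0) = u"])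
        (auto simp: obsY_def uYz_def uU_def)
    thus ?thesis using posR[OF r] unfolding hom[OF A3 pU] a_def by (simp add: field_simps)
  qed
  have den: "Pr p (\<lambda>x. uZ x = z \<and> uU x = u \<and> uR x = r) = a r * Pr p (\<lambda>x. uU x = u \<and> uR x = r)"
    if r: "r \<in> {1,2}" for r
  proof -
    have "Pr p (\<lambda>x. uZ x = z \<and> uU x = u \<and> uR x = r) * Pr p (\<lambda>x. uR x = r)
        = Pr p (\<lambda>x. uZ x = z \<and> uR x = r) * Pr p (\<lambda>x. uU x = u \<and> uR x = r)"
      by (rule rand_mult[OF A1, where f="\<lambda>(s1,s0,y1,y0). (s1,s0) = u"])
        (auto simp: uU_def)
    thus ?thesis using posR[OF r] unfolding a_def by (simp add: field_simps)
  qed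
  have N: "Pr p (\<lambda>x. obsY x \<and> uZ x = z \<and> uU x = u) = qd p z u * Pr p (\<lambda>x. uZ x = z \<and> uU x = u)"
  proof -
    have "Pr p (\<lambda>x. obsY x \<and> uZ x = z \<and> uU x = u) =
      Pr p (\<lambda>x. (obsY x \<and> uZ x = z \<and> uU x = u) \<and> uR x = 1) + Pr p (\<lambda>x. (obsY x \<and> uZ x = z \<and> uU x = u) \<and> uR x = 2)"
      by (rule Pr_R[OF trials])
    also have "\<dots> = Pr p (\<lambda>x. obsY x \<and> uZ x = z \<and> uR x = 1 \<and> uU x = u) + Pr p (\<lambda>x. obsY x \<and> uZ x = z \<and> uR x = 2 \<and> uU x = u)"
      by (intro arg_cong2[where f="(+)"] Pr_cong) auto
    also have "\<dots> = qd p z u * (a 1 * Pr p (\<lambda>x. uU x = u \<and> uR x = 1) + a 2 * Pr p (\<lambda>x. uU x = u \<and> uR x = 2))"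
      using num[of 1] num[of 2] by (simp add: algebra_simps)
    also have "a 1 * Pr p (\<lambda>x. uU x = u \<and> uR x = 1) + a 2 * Pr p (\<lambda>x. uU x = u \<and> uR x = 2)
       = Pr p (\<lambda>x. uZ x = z \<and> uU x = u \<and> uR x = 1) + Pr p (\<lambda>x. uZ x = z \<and> uU x = u \<and> uR x = 2)"
      using den[of 1] den[of 2] by simp
    also have "\<dots> = Pr p (\<lambda>x. uZ x = z \<and> uU x = u)"
      using Pr_R[OF trials, of "\<lambda>x. uZ x = z \<and> uU x = u"] by simp
    finally show ?thesis .
  qed
  show ?thesis unfolding delta_def cPr_def
    using N pZU by (simp add: conj_commute)
qed

lemma omega_eq:
  assumes A1: "randomization p" and A3: "homogeneity p"
    and pR: "Pr p (\<lambda>x. uR x = r) > 0"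
    and pZ: "Pr p (\<lambda>x. uZ x = z \<and> uR x = r) > 0"
    and pU1: "Pr p (\<lambda>x. uU x = (True, z)) > 0" and pU2: "Pr p (\<lambda>x. uU x = (z, False)) > 0"
  shows "omega p True z z r = qd p z (True, z) * piU p (True, z) r + qd p z (z, False) * piU p (z, False) r"
proof -
  have 1: "omega p True z z r = Pr p (\<lambda>x. uYz z x \<and> uSz z x = z \<and> uR x = r) / Pr p (\<lambda>x. uR x = r)"
    unfolding omega_def cPr_def
    by (rule rand_cond[OF A1 pZ pR, where f="\<lambda>(s1,s0,y1,y0). (if z then y1 else y0) \<and> (if z then s1 else s0) = z"])
      (auto simp: obsY_def obsS_def uYz_def uSz_def)
  have "Pr p (\<lambda>x. uYz z x \<and> uSz z x = z \<and> uR x = r) =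
     Pr p (\<lambda>x. (uYz z x \<and> uSz z x = z \<and> uR x = r) \<and> uSz (\<not> z) x)
     + Pr p (\<lambda>x. (uYz z x \<and> uSz z x = z \<and> uR x = r) \<and> \<not> uSz (\<not> z) x)" by (rule Pr_split)
  also have "Pr p (\<lambda>x. (uYz z x \<and> uSz z x = z \<and> uR x = r) \<and> uSz (\<not> z) x)
     = Pr p (\<lambda>x. uYz z x \<and> uU x = (True, z) \<and> uR x = r)"
    by (rule Pr_cong) (cases z; auto simp: uSz_def uU_def)
  also have "Pr p (\<lambda>x. (uYz z x \<and> uSz z x = z \<and> uR x = r) \<and> \<not> uSz (\<not> z) x)
     = Pr p (\<lambda>x. uYz z x \<and> uU x = (z, False) \<and> uR x = r)"
    by (rule Pr_cong) (cases z; auto simp: uSz_def uU_def)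
  finally have 2: "Pr p (\<lambda>x. uYz z x \<and> uSz z x = z \<and> uR x = r) =
     qd p z (True, z) * Pr p (\<lambda>x. uU x = (True, z) \<and> uR x = r)
     + qd p z (z, False) * Pr p (\<lambda>x. uU x = (z, False) \<and> uR x = r)"
    unfolding hom[OF A3 pU1] hom[OF A3 pU2] .
  show ?thesis unfolding 1 2 piU_def cPr_def by (simp add: add_divide_distrib)
qed

lemma tot_lem:
  fixes a b c d :: real
  assumes "d > 0" "d = a + b + c"
  shows "b / d = 1 - a / d - c / d"
proof -
  have "a / d + b / d + c / d = 1" using assms by (simp add: add_divide_distrib[symmetric])
  thus ?thesis by linarith
qed

lemma cramer:
  fixes a b x1 x2 y1 y2 w1 w2 :: real
  assumes "w1 = a * x1 + b * y1" "w2 = a * x2 + b * y2" "x1 * y2 - x2 * y1 \<noteq> 0"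
  shows "a = (w1 * y2 - w2 * y1) / (x1 * y2 - x2 * y1) \<and> b = (w2 * x1 - w1 * x2) / (x1 * y2 - x2 * y1)"
  using assms by (simp add: field_simps)

theorem mainTheorem3:
  fixes p :: "unit_t pmf"
  defines "ss \<equiv> (True, True)" and "ssb \<equiv> (True, False)" and "sbsb \<equiv> (False, False)"
  assumes trials: "AE x in measure_pmf p. uR x \<in> {1, 2}"
    and A1: "randomization p"
    and A2: "monotonicity p"
    and A3: "homogeneity p"
    and posR: "\<And>r. r \<in> {1, 2} \<Longrightarrow> Pr p (\<lambda>x. uR x = r) > 0"
    and posZ: "\<And>r. r \<in> {1, 2} \<Longrightarrow> 0 < cPr p uZ (\<lambda>x. uR x = r) \<and> cPr p uZ (\<lambda>x. uR x = r) < 1"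
  shows "(\<forall>r \<in> {1, 2}.
            piU p sbsb r = cPr p (\<lambda>x. \<not> obsS x) (\<lambda>x. uZ x \<and> uR x = r) \<and>
            piU p ss r = cPr p obsS (\<lambda>x. \<not> uZ x \<and> uR x = r) \<and>
            piU p ssb r = 1 - piU p ss r - piU p sbsb r)
       \<and> ((piU p ss 1 * piU p ssb 2 - piU p ss 2 * piU p ssb 1 \<noteq> 0
            \<and> Pr p (\<lambda>x. uZ x \<and> uU x = ss) > 0 \<and> Pr p (\<lambda>x. uZ x \<and> uU x = ssb) > 0) \<longrightarrow>
            delta p True ss =
              (omega p True True True 1 * piU p ssb 2 - omega p True True True 2 * piU p ssb 1)
              / (piU p ss 1 * piU p ssb 2 - piU p ss 2 * piU p ssb 1) \<and>
            delta p True ssb =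
              (omega p True True True 2 * piU p ss 1 - omega p True True True 1 * piU p ss 2)
              / (piU p ss 1 * piU p ssb 2 - piU p ss 2 * piU p ssb 1))
       \<and> ((piU p ssb 1 * piU p sbsb 2 - piU p ssb 2 * piU p sbsb 1 \<noteq> 0
            \<and> Pr p (\<lambda>x. \<not> uZ x \<and> uU x = ssb) > 0 \<and> Pr p (\<lambda>x. \<not> uZ x \<and> uU x = sbsb) > 0) \<longrightarrow>
            delta p False ssb =
              (omega p True False False 1 * piU p sbsb 2 - omega p True False False 2 * piU p sbsb 1)
              / (piU p ssb 1 * piU p sbsb 2 - piU p ssb 2 * piU p sbsb 1) \<and>
            delta p False sbsb =
              (omega p True False False 2 * piU p ssb 1 - omega p True False False 1 * piU p ssb 2)
              / (piU p ssb 1 * piU p sbsb 2 - piU p ssb 2 * piU p sbsb 1))"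
proof -
  have pR: "Pr p (\<lambda>x. uR x = r) > 0" if "r \<in> {1,2}" for r using posR that by blast
  have pZ1: "Pr p (\<lambda>x. uZ x = True \<and> uR x = r) > 0" if r: "r \<in> {1,2}" for r
    using posZ[OF r] pR[OF r] unfolding cPr_def by (simp add: zero_less_divide_iff)
  have pZ0: "Pr p (\<lambda>x. uZ x = False \<and> uR x = r) > 0" if r: "r \<in> {1,2}" for r
  proof -
    have lt: "Pr p (\<lambda>x. uZ x \<and> uR x = r) < Pr p (\<lambda>x. uR x = r)"
      using posZ[OF r] pR[OF r] unfolding cPr_def by (simp add: divide_less_eq)
    have "Pr p (\<lambda>x. uR x = r) = Pr p (\<lambda>x. uR x = r \<and> uZ x) + Pr p (\<lambda>x. uR x = r \<and> \<not> uZ x)"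
      by (rule Pr_split)
    also have "Pr p (\<lambda>x. uR x = r \<and> uZ x) = Pr p (\<lambda>x. uZ x \<and> uR x = r)" by (rule Pr_cong) auto
    also have "Pr p (\<lambda>x. uR x = r \<and> \<not> uZ x) = Pr p (\<lambda>x. uZ x = False \<and> uR x = r)" by (rule Pr_cong) auto
    finally show ?thesis using lt by linarith
  qed
  have mono: "AE x in measure_pmf p. uS0 x \<longrightarrow> uS1 x" using A2 unfolding monotonicity_def .
  have part1: "piU p sbsb r = cPr p (\<lambda>x. \<not> obsS x) (\<lambda>x. uZ x \<and> uR x = r) \<and>
            piU p ss r = cPr p obsS (\<lambda>x. \<not> uZ x \<and> uR x = r) \<and>
            piU p ssb r = 1 - piU p ss r - piU p sbsb r" if r: "r \<in> {1,2}" for r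
  proof -
    have c1: "cPr p (\<lambda>x. \<not> obsS x) (\<lambda>x. uZ x \<and> uR x = r) = Pr p (\<lambda>x. \<not> uS1 x \<and> uR x = r) / Pr p (\<lambda>x. uR x = r)"
      unfolding cPr_def
      by (rule rand_cond[OF A1 pZ1[OF r] pR[OF r], where f="\<lambda>(s1,s0,y1,y0). \<not> s1"])
        (auto simp: obsS_def uSz_def)
    have c2: "cPr p obsS (\<lambda>x. \<not> uZ x \<and> uR x = r) = Pr p (\<lambda>x. uS0 x \<and> uR x = r) / Pr p (\<lambda>x. uR x = r)"
      unfolding cPr_def
      by (rule rand_cond[OF A1 pZ0[OF r] pR[OF r], where f="\<lambda>(s1,s0,y1,y0). s0"])
        (auto simp: obsS_def uSz_def)
    have e1: "Pr p (\<lambda>x. \<not> uS1 x \<and> uR x = r) = Pr p (\<lambda>x. uU x = sbsb \<and> uR x = r)"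
      by (rule Pr_AE_cong) (use mono in \<open>auto simp: uU_def sbsb_def elim: AE_mp\<close>)
    have e2: "Pr p (\<lambda>x. uS0 x \<and> uR x = r) = Pr p (\<lambda>x. uU x = ss \<and> uR x = r)"
      by (rule Pr_AE_cong) (use mono in \<open>auto simp: uU_def ss_def elim: AE_mp\<close>)
    have "Pr p (\<lambda>x. uR x = r) = Pr p (\<lambda>x. uR x = r \<and> uS1 x) + Pr p (\<lambda>x. uR x = r \<and> \<not> uS1 x)"
      by (rule Pr_split)
    also have "Pr p (\<lambda>x. uR x = r \<and> uS1 x) = Pr p (\<lambda>x. (uR x = r \<and> uS1 x) \<and> uS0 x) + Pr p (\<lambda>x. (uR x = r \<and> uS1 x) \<and> \<not> uS0 x)"
      by (rule Pr_split)
    also have "Pr p (\<lambda>x. (uR x = r \<and> uS1 x) \<and> uS0 x) = Pr p (\<lambda>x. uU x = ss \<and> uR x = r)"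
      by (rule Pr_cong) (auto simp: uU_def ss_def)
    also have "Pr p (\<lambda>x. (uR x = r \<and> uS1 x) \<and> \<not> uS0 x) = Pr p (\<lambda>x. uU x = ssb \<and> uR x = r)"
      by (rule Pr_cong) (auto simp: uU_def ssb_def)
    also have "Pr p (\<lambda>x. uR x = r \<and> \<not> uS1 x) = Pr p (\<lambda>x. uU x = sbsb \<and> uR x = r)"
      using e1 by (metis (no_types, lifting) Pr_cong)
    finally have tot: "Pr p (\<lambda>x. uR x = r) = Pr p (\<lambda>x. uU x = ss \<and> uR x = r) + Pr p (\<lambda>x. uU x = ssb \<and> uR x = r)
        + Pr p (\<lambda>x. uU x = sbsb \<and> uR x = r)" .
    show ?thesis unfolding c1 c2 e1 e2 unfolding piU_def cPr_def
      using tot_lem[OF pR[OF r] tot] by simp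
  qed
  have part2: "((piU p ss 1 * piU p ssb 2 - piU p ss 2 * piU p ssb 1 \<noteq> 0
            \<and> Pr p (\<lambda>x. uZ x \<and> uU x = ss) > 0 \<and> Pr p (\<lambda>x. uZ x \<and> uU x = ssb) > 0) \<longrightarrow>
            delta p True ss =
              (omega p True True True 1 * piU p ssb 2 - omega p True True True 2 * piU p ssb 1)
              / (piU p ss 1 * piU p ssb 2 - piU p ss 2 * piU p ssb 1) \<and>
            delta p True ssb =
              (omega p True True True 2 * piU p ss 1 - omega p True True True 1 * piU p ss 2)
              / (piU p ss 1 * piU p ssb 2 - piU p ss 2 * piU p ssb 1))"
  proof
    assume H: "piU p ss 1 * piU p ssb 2 - piU p ss 2 * piU p ssb 1 \<noteq> 0
            \<and> Pr p (\<lambda>x. uZ x \<and> uU x = ss) > 0 \<and> Pr p (\<lambda>x. uZ x \<and> uU x = ssb) > 0"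
    have h1: "Pr p (\<lambda>x. uZ x = True \<and> uU x = (True, True)) > 0" using H by (simp add: ss_def)
    have h2: "Pr p (\<lambda>x. uZ x = True \<and> uU x = (True, False)) > 0" using H by (simp add: ssb_def)
    have d1: "delta p True ss = qd p True ss" unfolding ss_def by (rule delta_eq[OF trials A1 A3 posR h1])
    have d2: "delta p True ssb = qd p True ssb" unfolding ssb_def by (rule delta_eq[OF trials A1 A3 posR h2])
    have o: "omega p True True True r = qd p True ss * piU p ss r + qd p True ssb * piU p ssb r"
      if r: "r \<in> {1,2}" for r
      using omega_eq[OF A1 A3 pR[OF r] pZ1[OF r] pU_from[OF h1] pU_from[OF h2]]
      by (simp add: ss_def ssb_def)
    show "delta p True ss =
              (omega p True True True 1 * piU p ssb 2 - omega p True True True 2 * piU p ssb 1)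
              / (piU p ss 1 * piU p ssb 2 - piU p ss 2 * piU p ssb 1) \<and>
            delta p True ssb =
              (omega p True True True 2 * piU p ss 1 - omega p True True True 1 * piU p ss 2)
              / (piU p ss 1 * piU p ssb 2 - piU p ss 2 * piU p ssb 1)"
      unfolding d1 d2 by (rule cramer[OF o[of 1] o[of 2]]) (use H in auto)
  qed
  have part3: "((piU p ssb 1 * piU p sbsb 2 - piU p ssb 2 * piU p sbsb 1 \<noteq> 0
            \<and> Pr p (\<lambda>x. \<not> uZ x \<and> uU x = ssb) > 0 \<and> Pr p (\<lambda>x. \<not> uZ x \<and> uU x = sbsb) > 0) \<longrightarrow>
            delta p False ssb =
              (omega p True False False 1 * piU p sbsb 2 - omega p True False False 2 * piU p sbsb 1)
              / (piU p ssb 1 * piU p sbsb 2 - piU p ssb 2 * piU p sbsb 1) \<and>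
            delta p False sbsb =
              (omega p True False False 2 * piU p ssb 1 - omega p True False False 1 * piU p ssb 2)
              / (piU p ssb 1 * piU p sbsb 2 - piU p ssb 2 * piU p sbsb 1))"
  proof
    assume H: "piU p ssb 1 * piU p sbsb 2 - piU p ssb 2 * piU p sbsb 1 \<noteq> 0
            \<and> Pr p (\<lambda>x. \<not> uZ x \<and> uU x = ssb) > 0 \<and> Pr p (\<lambda>x. \<not> uZ x \<and> uU x = sbsb) > 0"
    have h1: "Pr p (\<lambda>x. uZ x = False \<and> uU x = (True, False)) > 0" using H by (simp add: ssb_def)
    have h2: "Pr p (\<lambda>x. uZ x = False \<and> uU x = (False, False)) > 0" using H by (simp add: sbsb_def)
    have d1: "delta p False ssb = qd p False ssb" unfolding ssb_def by (rule delta_eq[OF trials A1 A3 posR h1])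
    have d2: "delta p False sbsb = qd p False sbsb" unfolding sbsb_def by (rule delta_eq[OF trials A1 A3 posR h2])
    have o: "omega p True False False r = qd p False ssb * piU p ssb r + qd p False sbsb * piU p sbsb r"
      if r: "r \<in> {1,2}" for r
      using omega_eq[OF A1 A3 pR[OF r] pZ0[OF r] pU_from[OF h1] pU_from[OF h2]]
      by (simp add: sbsb_def ssb_def)
    show "delta p False ssb =
              (omega p True False False 1 * piU p sbsb 2 - omega p True False False 2 * piU p sbsb 1)
              / (piU p ssb 1 * piU p sbsb 2 - piU p ssb 2 * piU p sbsb 1) \<and>
            delta p False sbsb =
              (omega p True False False 2 * piU p ssb 1 - omega p True False False 1 * piU p ssb 2)
              / (piU p ssb 1 * piU p sbsb 2 - piU p ssb 2 * piU p sbsb 1)"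
      unfolding d1 d2 by (rule cramer[OF o[of 1] o[of 2]]) (use H in auto)
  qed
  show ?thesis using part1 part2 part3 by blast
qed

end
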